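(* Let $n\ge2$ and let $A=(a_{ij})$ be an $n\times n$ nonnegative irreducible matrix with row sums $r_1\ge r_2\ge\cdots\ge r_n$. Let $S=\min_{1\le i\le n}a_{ii}$ and $T=\min_{i\ne j}a_{ij}$. Then \[\rho(A)\ge \frac{r_n+S-T+\sqrt{(r_n-S+T)^2+4T\sum_{k=1}^{n-1}(r_k-r_n)}}{2}.\] Equality holds if and only if $r_1=\cdots=r_n$, or $T>0$ and for some $2\le t\le n$: (i) $a_{kk}=S$ for $1\le k\le t-1$; (ii) $a_{kl}=T$ for all $1\le k\le n$, $1\le l\le t-1$, $k\ne l$; (iii) $r_t=\cdots=r_n$.
   Context: $\rho(A)$ denotes the spectral radius of $A$. *)

theory Defs
  imports "Jordan_Normal_Form.Spectral_Radius"
begin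

text \<open>Row sum of row i of a real square matrix (0-based indices).\<close>
definition row_sum :: "real mat \<Rightarrow> nat \<Rightarrow> real" where
  "row_sum A i = (\<Sum>j<dim_col A. A $$ (i, j))"

definition nonneg_mat :: "real mat \<Rightarrow> bool" where
  "nonneg_mat A \<longleftrightarrow> (\<forall>i<dim_row A. \<forall>j<dim_col A. A $$ (i, j) \<ge> 0)"

text \<open>An n x n matrix is reducible iff, after a simultaneous permutation of rows and columns,
  it is block upper triangular; i.e. there is a nonempty proper subset I of the index set with
  A(i,j) = 0 for all i in I, j not in I.\<close>
definition reducible_mat :: "real mat \<Rightarrow> bool" where
  "reducible_mat A \<longleftrightarrow> (\<exists>I. I \<noteq> {} \<and> I \<subset> {..<dim_row A} \<and>
      (\<forall>i\<in>I. \<forall>j\<in>{..<dim_row A} - I. A $$ (i, j) = 0))"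

definition irreducible_mat :: "real mat \<Rightarrow> bool" where
  "irreducible_mat A \<longleftrightarrow> \<not> reducible_mat A"

definition rho :: "real mat \<Rightarrow> real" where
  "rho A = spectral_radius (map_mat complex_of_real A)"

end

theory Submission
  imports Defs
begin

definition mv :: "real mat \<Rightarrow> nat \<Rightarrow> (nat \<Rightarrow> real) \<Rightarrow> nat \<Rightarrow> real" where
  "mv A n x i = (\<Sum>j<n. A $$ (i, j) * x j)"

lemma cmv_index:
  assumes "B \<in> carrier_mat n n" "v \<in> carrier_vec n" "k < n"
  shows "(B *\<^sub>v v) $ k = (\<Sum>j<n. B $$ (k, j) * v $ j)"
  using assms by (auto simp: scalar_prod_def atLeast0LessThan intro!: sum.cong)

lemma L2:
  assumes A: "A \<in> carrier_mat n n" and n: "n > 0" and nn: "nonneg_mat A"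
    and xpos: "\<forall>i<n. x i > 0" and eq: "\<forall>i<n. mv A n x i = lam * x i"
  shows "rho A \<le> lam"
proof -
  define B where "B = map_mat complex_of_real A"
  have B: "B \<in> carrier_mat n n" using A by (simp add: B_def)
  from spectral_radius_mem_max(1)[OF B n] obtain e where e: "e \<in> spectrum B"
    and re: "rho A = norm e" unfolding rho_def B_def by auto
  from e obtain v where ev: "eigenvector B v e" unfolding spectrum_def eigenvalue_def by auto
  hence v: "v \<in> carrier_vec n" and v0: "v \<noteq> 0\<^sub>v n" and Bv: "B *\<^sub>v v = e \<cdot>\<^sub>v v"
    using B unfolding eigenvector_def by auto
  define f where "f i = norm (v $ i) / x i" for i
  define M where "M = Max (f ` {..<n})"
  have fin: "finite (f ` {..<n})" by simp
  have ne: "f ` {..<n} \<noteq> {}" using n by auto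
  obtain k where k: "k < n" and Mk: "M = f k"
    using Max_in[OF fin ne] unfolding M_def by auto
  have fleM: "f j \<le> M" if "j < n" for j using that fin unfolding M_def by auto
  have vle: "norm (v $ j) \<le> M * x j" if "j < n" for j
    using fleM[OF that] xpos that unfolding f_def by (simp add: divide_le_eq)
  obtain j where j: "j < n" "v $ j \<noteq> 0"
    using v0 v by (metis eq_vecI carrier_vecD index_zero_vec(1) index_zero_vec(2))
  have "0 < norm (v $ j)" using j by simp
  also have "\<dots> \<le> M * x j" using vle j by simp
  finally have Mpos: "M > 0" using xpos j by (auto simp add: zero_less_mult_iff)
  have vk: "norm (v $ k) = M * x k" using Mk xpos[rule_format, OF k] unfolding f_def by simp
  have "norm e * norm (v $ k) = norm ((B *\<^sub>v v) $ k)"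
    using Bv v k by (simp add: norm_mult)
  also have "\<dots> = norm (\<Sum>j<n. B $$ (k, j) * v $ j)" using cmv_index[OF B v k] by simp
  also have "\<dots> \<le> (\<Sum>j<n. norm (B $$ (k, j) * v $ j))" by (rule norm_sum)
  also have "\<dots> \<le> (\<Sum>j<n. A $$ (k, j) * (M * x j))"
  proof (rule sum_mono)
    fix j assume "j \<in> {..<n}"
    hence j: "j < n" by simp
    have a0: "A $$ (k, j) \<ge> 0" using nn A k j unfolding nonneg_mat_def by auto
    have "norm (B $$ (k, j) * v $ j) = A $$ (k, j) * norm (v $ j)"
      using A k j a0 by (simp add: B_def norm_mult)
    also have "\<dots> \<le> A $$ (k, j) * (M * x j)" using vle[OF j] a0 by (rule mult_left_mono)
    finally show "norm (B $$ (k, j) * v $ j) \<le> A $$ (k, j) * (M * x j)" .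
  qed
  also have "\<dots> = M * mv A n x k" unfolding mv_def by (simp add: sum_distrib_left algebra_simps)
  also have "\<dots> = M * lam * x k" using eq k by simp
  finally have "norm e * (M * x k) \<le> lam * (M * x k)" using vk by (simp add: algebra_simps)
  moreover have "M * x k > 0" using Mpos xpos k by simp
  ultimately have "norm e \<le> lam" using mult_right_le_imp_le by blast
  thus ?thesis using re by simp
qed

lemma rho_nonneg:
  assumes A: "A \<in> carrier_mat n n" and n: "n > 0"
  shows "rho A \<ge> 0"
proof -
  have B: "map_mat complex_of_real A \<in> carrier_mat n n" using A by simp
  from spectral_radius_mem_max(1)[OF B n] show ?thesis unfolding rho_def by auto
qed

lemma L1:
  assumes A: "A \<in> carrier_mat n n" and n: "n > 0" and nn: "nonneg_mat A"
    and xpos: "\<forall>i<n. x i > 0" and ge: "\<forall>i<n. mv A n x i \<ge> lam * x i"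
  shows "rho A \<ge> lam"
proof (rule ccontr)
  assume "\<not> rho A \<ge> lam"
  hence lt: "rho A < lam" by simp
  have r0: "rho A \<ge> 0" by (rule rho_nonneg[OF A n])
  define mu where "mu = (rho A + lam) / 2"
  have mu: "mu > 0" "rho A < mu" "mu < lam" using lt r0 unfolding mu_def by auto
  define R where "R = (1 / mu) \<cdot>\<^sub>m A"
  define M where "M = map_mat complex_of_real R"
  define B where "B = map_mat complex_of_real A"
  have R: "R \<in> carrier_mat n n" using A by (simp add: R_def)
  have M: "M \<in> carrier_mat n n" using R by (simp add: M_def)
  have B: "B \<in> carrier_mat n n" using A by (simp add: B_def)
  have srM: "spectral_radius M < 1"
  proof -
    from spectral_radius_mem_max(1)[OF M n] obtain e where e: "e \<in> spectrum M"
      and re: "spectral_radius M = norm e" by auto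
    from e obtain v where ev: "eigenvector M v e" unfolding spectrum_def eigenvalue_def by auto
    hence v: "v \<in> carrier_vec n" and v0: "v \<noteq> 0\<^sub>v n" and Mv: "M *\<^sub>v v = e \<cdot>\<^sub>v v"
      using M unfolding eigenvector_def by auto
    have "B *\<^sub>v v = (of_real mu * e) \<cdot>\<^sub>v v"
    proof (rule eq_vecI)
      show "dim_vec (B *\<^sub>v v) = dim_vec ((of_real mu * e) \<cdot>\<^sub>v v)" using B v by simp
      fix i assume "i < dim_vec ((of_real mu * e) \<cdot>\<^sub>v v)"
      hence i: "i < n" using v by simp
      have "(B *\<^sub>v v) $ i = (\<Sum>j<n. B $$ (i, j) * v $ j)" by (rule cmv_index[OF B v i])
      also have "\<dots> = (\<Sum>j<n. of_real mu * (M $$ (i, j) * v $ j))"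
        using A i mu(1) by (intro sum.cong) (auto simp: B_def M_def R_def)
      also have "\<dots> = of_real mu * (M *\<^sub>v v) $ i"
        using cmv_index[OF M v i] by (simp add: sum_distrib_left)
      also have "\<dots> = ((of_real mu * e) \<cdot>\<^sub>v v) $ i" using Mv i v by simp
      finally show "(B *\<^sub>v v) $ i = ((of_real mu * e) \<cdot>\<^sub>v v) $ i" .
    qed
    hence "eigenvector B v (of_real mu * e)" using v v0 B unfolding eigenvector_def by auto
    hence "norm (of_real mu * e) \<in> norm ` spectrum B"
      unfolding spectrum_def eigenvalue_def by auto
    from spectral_radius_mem_max(2)[OF B n this]
    have "mu * norm e \<le> rho A" using mu(1) unfolding rho_def B_def by (simp add: norm_mult)
    hence "mu * norm e < mu * 1" using mu by linarith
    hence "norm e < 1" using mu(1) by (simp only: mult_less_cancel_left_pos)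
    thus ?thesis using re by simp
  qed
  from spectral_radius_jnf_norm_bound_less_1_upper_triangular[OF M srM]
  obtain C where C: "\<And>k. norm_bound (M ^\<^sub>m k) C" by auto
  define q where "q = lam / mu"
  have q1: "q > 1" using mu unfolding q_def by simp
  have Rx: "(\<Sum>j<n. R $$ (l, j) * x j) \<ge> q * x l" if l: "l < n" for l
  proof -
    have "(\<Sum>j<n. R $$ (l, j) * x j) = mv A n x l / mu"
      unfolding mv_def using A l by (simp add: R_def sum_divide_distrib)
    also have "\<dots> \<ge> lam * x l / mu" using ge l mu(1) by (simp add: divide_right_mono)
    finally show ?thesis unfolding q_def by simp
  qed
  have main: "(\<forall>i<n. \<forall>j<n. (R ^\<^sub>m k) $$ (i, j) \<ge> 0) \<and>
      (\<forall>i<n. (\<Sum>j<n. (R ^\<^sub>m k) $$ (i, j) * x j) \<ge> q ^ k * x i)" for k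
  proof (induction k)
    case 0
    have "(\<Sum>j<n. (1\<^sub>m n :: real mat) $$ (i, j) * x j) = x i" if "i < n" for i
      using that by (simp add: one_mat_def if_distrib[of "\<lambda>c. c * _"] cong: if_cong)
    moreover have "dim_row R = n" using R by simp
    ultimately show ?case by auto
  next
    case (Suc k)
    define P where "P = R ^\<^sub>m k"
    have P: "P \<in> carrier_mat n n" using R by (simp add: P_def)
    have Pnn: "\<forall>i<n. \<forall>j<n. P $$ (i, j) \<ge> 0" and Px: "\<forall>i<n. (\<Sum>j<n. P $$ (i, j) * x j) \<ge> q ^ k * x i"
      using Suc unfolding P_def by auto
    have ent: "(R ^\<^sub>m Suc k) $$ (i, j) = (\<Sum>l<n. P $$ (i, l) * R $$ (l, j))" if "i < n" "j < n" for i j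
      using that P R by (simp add: P_def[symmetric] scalar_prod_def atLeast0LessThan)
    have Rnn: "R $$ (l, j) \<ge> 0" if "l < n" "j < n" for l j
      using that nn A mu(1) unfolding nonneg_mat_def R_def by auto
    show ?case
    proof (intro conjI allI impI)
      fix i j assume "i < n" "j < n"
      thus "(R ^\<^sub>m Suc k) $$ (i, j) \<ge> 0" using ent Pnn Rnn by (auto intro!: sum_nonneg)
    next
      fix i assume i: "i < n"
      have "q ^ Suc k * x i = q * (q ^ k * x i)" by simp
      also have "\<dots> \<le> q * (\<Sum>l<n. P $$ (i, l) * x l)" using Px i q1 by simp
      also have "\<dots> = (\<Sum>l<n. P $$ (i, l) * (q * x l))"
        by (simp add: sum_distrib_left algebra_simps)
      also have "\<dots> \<le> (\<Sum>l<n. P $$ (i, l) * (\<Sum>j<n. R $$ (l, j) * x j))"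
        using Pnn i Rx by (intro sum_mono mult_left_mono) auto
      also have "\<dots> = (\<Sum>j<n. \<Sum>l<n. P $$ (i, l) * R $$ (l, j) * x j)"
        by (subst sum.swap) (simp add: sum_distrib_left mult.assoc)
      also have "\<dots> = (\<Sum>j<n. (R ^\<^sub>m Suc k) $$ (i, j) * x j)"
        using ent i by (simp add: sum_distrib_right)
      finally show "(\<Sum>j<n. (R ^\<^sub>m Suc k) $$ (i, j) * x j) \<ge> q ^ Suc k * x i" .
    qed
  qed
  define X where "X = (\<Sum>j<n. x j)"
  have x0: "x 0 > 0" using xpos n by simp
  obtain k where k: "C * X / x 0 < q ^ k" using real_arch_pow[OF q1] by blast
  have "q ^ k * x 0 \<le> (\<Sum>j<n. (R ^\<^sub>m k) $$ (0, j) * x j)" using main n by auto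
  also have "\<dots> \<le> (\<Sum>j<n. C * x j)"
  proof (rule sum_mono)
    fix j assume "j \<in> {..<n}"
    hence j: "j < n" by simp
    have "norm ((M ^\<^sub>m k) $$ (0, j)) \<le> C" using C[of k] j n M unfolding norm_bound_def by auto
    moreover have "M ^\<^sub>m k = map_mat complex_of_real (R ^\<^sub>m k)"
      unfolding M_def by (rule of_real_hom.mat_hom_pow[OF R, symmetric])
    ultimately have "\<bar>(R ^\<^sub>m k) $$ (0, j)\<bar> \<le> C" using j n R by simp
    thus "(R ^\<^sub>m k) $$ (0, j) * x j \<le> C * x j" using xpos j
      by (intro mult_right_mono) auto
  qed
  also have "\<dots> = C * X" unfolding X_def by (simp add: sum_distrib_left)
  finally have "q ^ k * x 0 \<le> C * X" .
  moreover have "C * X < q ^ k * x 0" using k x0 by (simp add: pos_divide_less_eq)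
  ultimately show False by simp
qed


lemma mv_nonneg:
  assumes A: "A \<in> carrier_mat n n" and nn: "nonneg_mat A" and i: "i < n"
    and v: "\<forall>j<n. v j \<ge> 0"
  shows "mv A n v i \<ge> 0"
  unfolding mv_def using A nn i v unfolding nonneg_mat_def by (auto intro!: sum_nonneg)

lemma mv_add: "mv A n (\<lambda>i. v i + w i) = (\<lambda>i. mv A n v i + mv A n w i)"
  unfolding mv_def by (auto simp: algebra_simps sum.distrib)

lemma mv_diff_scale: "mv A n (\<lambda>i. v i - c * w i) = (\<lambda>i. mv A n v i - c * mv A n w i)"
  unfolding mv_def by (auto simp: algebra_simps sum_subtractf sum_distrib_left)

lemma L3:
  assumes A: "A \<in> carrier_mat n n" and n: "n > 0" and nn: "nonneg_mat A"
    and irr: "irreducible_mat A"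
    and xpos: "\<forall>i<n. x i > 0" and ge: "\<forall>i<n. mv A n x i \<ge> lam * x i"
    and gt: "\<exists>i<n. mv A n x i > lam * x i"
  shows "rho A > lam"
proof -
  define F where "F v = (\<lambda>i. v i + mv A n v i)" for v
  define w where "w k = (F ^^ k) x" for k
  define u0 where "u0 = (\<lambda>i. mv A n x i - lam * x i)"
  define u where "u k = (F ^^ k) u0" for k
  have wS: "w (Suc k) = F (w k)" for k unfolding w_def by simp
  have uS: "u (Suc k) = F (u k)" for k unfolding u_def by simp
  have inv: "u k = (\<lambda>i. mv A n (w k) i - lam * w k i)" for k
  proof (induction k)
    case 0 thus ?case unfolding u_def w_def u0_def by simp
  next
    case (Suc k)
    have e1: "mv A n (w (Suc k)) = (\<lambda>i. mv A n (w k) i + mv A n (mv A n (w k)) i)"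
      unfolding wS F_def by (rule mv_add)
    have e2: "mv A n (u k) = (\<lambda>i. mv A n (mv A n (w k)) i - lam * mv A n (w k) i)"
      unfolding Suc by (rule mv_diff_scale)
    show ?case
    proof (rule ext)
      fix i
      have "u (Suc k) i = u k i + mv A n (u k) i" by (simp add: uS F_def)
      also have "\<dots> = (mv A n (w k) i - lam * w k i) + (mv A n (mv A n (w k)) i - lam * mv A n (w k) i)"
        unfolding e2 by (simp add: Suc)
      also have "\<dots> = mv A n (w (Suc k)) i - lam * w (Suc k) i"
        unfolding e1 by (simp add: wS F_def algebra_simps)
      finally show "u (Suc k) i = mv A n (w (Suc k)) i - lam * w (Suc k) i" .
    qed
  qed
  have pos: "(\<forall>i<n. w k i > 0) \<and> (\<forall>i<n. u k i \<ge> 0)" for k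
  proof (induction k)
    case 0 thus ?case using xpos ge unfolding u_def w_def u0_def by auto
  next
    case (Suc k)
    hence a: "\<forall>i<n. w k i > 0" and b: "\<forall>i<n. u k i \<ge> 0" by auto
    have "mv A n (w k) i \<ge> 0" if "i < n" for i
      using mv_nonneg[OF A nn that] a by (auto simp: less_imp_le)
    moreover have "mv A n (u k) i \<ge> 0" if "i < n" for i
      using mv_nonneg[OF A nn that] b by auto
    ultimately show ?case unfolding wS uS F_def using a b by (auto simp: add_pos_nonneg)
  qed
  define Z where "Z k = {i. i < n \<and> u k i = 0}" for k
  have Zsub: "Z (Suc k) \<subseteq> Z k" for k
  proof
    fix i assume "i \<in> Z (Suc k)"
    hence i: "i < n" and z: "u k i + mv A n (u k) i = 0" unfolding Z_def uS F_def by auto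
    have "mv A n (u k) i \<ge> 0" using mv_nonneg[OF A nn i] pos[of k] by auto
    moreover have "u k i \<ge> 0" using pos[of k] i by auto
    ultimately show "i \<in> Z k" using z i unfolding Z_def by auto
  qed
  have Zneq: "Z (Suc k) \<noteq> Z k" if ne: "Z k \<noteq> {}" and pr: "Z k \<noteq> {..<n}" for k
  proof
    assume eqZ: "Z (Suc k) = Z k"
    have "reducible_mat A"
      unfolding reducible_mat_def
    proof (intro exI conjI ballI)
      show "Z k \<noteq> {}" by fact
      have "Z k \<subseteq> {..<n}" unfolding Z_def by auto
      thus "Z k \<subset> {..<dim_row A}" using pr A by auto
      fix i j assume i: "i \<in> Z k" and j: "j \<in> {..<dim_row A} - Z k"
      have iS: "i \<in> Z (Suc k)" using eqZ i by simp
      have in_: "i < n" "u k i = 0" using i unfolding Z_def by auto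
      have "u k i + mv A n (u k) i = 0" using iS unfolding Z_def uS F_def by auto
      hence s0: "(\<Sum>l<n. A $$ (i, l) * u k l) = 0" using in_ unfolding mv_def by simp
      have jn: "j < n" and ujpos: "u k j \<noteq> 0" using j A unfolding Z_def by auto
      have ujp: "u k j > 0" using pos[of k] jn ujpos by (simp add: order_less_le)
      have "\<forall>l\<in>{..<n}. A $$ (i, l) * u k l = 0"
        using s0 pos[of k] nn A in_(1) unfolding nonneg_mat_def
        by (subst sum_nonneg_eq_0_iff[symmetric]) auto
      hence "A $$ (i, j) * u k j = 0" using jn by auto
      thus "A $$ (i, j) = 0" using ujp by simp
    qed
    thus False using irr unfolding irreducible_mat_def by simp
  qed
  have finZ: "finite (Z k)" for k unfolding Z_def by simp
  have cardZ: "Z k = {} \<or> card (Z k) + k < n" for k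
  proof (induction k)
    case 0
    obtain i where i: "i < n" "mv A n x i > lam * x i" using gt by auto
    have "Z 0 \<subseteq> {..<n} - {i}" using i unfolding Z_def u_def u0_def by auto
    hence "card (Z 0) \<le> card ({..<n} - {i})" by (intro card_mono) auto
    also have "\<dots> = n - 1" using i by simp
    finally show ?case using n by linarith
  next
    case (Suc k)
    show ?case
    proof (cases "Z k = {}")
      case True
      hence "Z (Suc k) = {}" using Zsub[of k] by simp
      thus ?thesis by simp
    next
      case False
      hence c: "card (Z k) + k < n" using Suc by simp
      have "Z k \<noteq> {..<n}"
      proof
        assume "Z k = {..<n}"
        hence "card (Z k) = n" by simp
        thus False using c by simp
      qed
      hence "Z (Suc k) \<noteq> Z k" by (rule Zneq[OF False])
      hence "Z (Suc k) \<subset> Z k" using Zsub[of k] by (simp add: psubset_eq)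
      hence "card (Z (Suc k)) < card (Z k)" using finZ by (rule psubset_card_mono[rotated])
      thus ?thesis using c by simp
    qed
  qed
  have Zn: "Z n = {}" using cardZ[of n] by simp
  define y where "y = w n"
  have ypos: "\<forall>i<n. y i > 0" using pos[of n] unfolding y_def by simp
  have upos: "\<forall>i<n. u n i > 0" using pos[of n] Zn unfolding Z_def by (auto simp: order_less_le)
  define m where "m = Min ((\<lambda>i. u n i / y i) ` {..<n})"
  have fin: "finite ((\<lambda>i. u n i / y i) ` {..<n})" by simp
  have ne: "(\<lambda>i. u n i / y i) ` {..<n} \<noteq> {}" using n by auto
  obtain k where k: "k < n" and mk: "m = u n k / y k" using Min_in[OF fin ne] unfolding m_def by auto
  have mpos: "m > 0" using mk upos ypos k by simp
  have mle: "m \<le> u n i / y i" if "i < n" for i using that fin unfolding m_def by auto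
  have "\<forall>i<n. mv A n y i \<ge> (lam + m) * y i"
  proof (intro allI impI)
    fix i assume i: "i < n"
    have "m * y i \<le> u n i" using mle[OF i] ypos i by (simp add: le_divide_eq)
    moreover have "u n i = mv A n y i - lam * y i" using inv[of n] unfolding y_def by simp
    ultimately show "mv A n y i \<ge> (lam + m) * y i" by (simp add: algebra_simps)
  qed
  from L1[OF A n nn ypos this] mpos show ?thesis by simp
qed


lemma dl: "P \<or> (Q \<and> R) \<Longrightarrow> \<not> Q \<Longrightarrow> P" by blast

lemma dl2: "P \<or> Q \<Longrightarrow> \<not> P \<Longrightarrow> Q" by blast

lemma row_sum_mv: assumes "A \<in> carrier_mat n n" shows "row_sum A i = mv A n (\<lambda>_. 1) i"
  using assms unfolding row_sum_def mv_def by simp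

theorem corollary3:
  fixes A :: "real mat" and n :: nat
  assumes "n \<ge> 2"
    and "A \<in> carrier_mat n n"
    and "nonneg_mat A"
    and "irreducible_mat A"
    and "\<forall>i j. i \<le> j \<and> j < n \<longrightarrow> row_sum A i \<ge> row_sum A j"
  defines "S \<equiv> Min {A $$ (i, i) | i. i < n}"
    and "T \<equiv> Min {A $$ (i, j) | i j. i < n \<and> j < n \<and> i \<noteq> j}"
  shows "(rho A \<ge> (row_sum A (n - 1) + S - T +
           sqrt ((row_sum A (n - 1) - S + T)\<^sup>2
                 + 4 * T * (\<Sum>k<n - 1. row_sum A k - row_sum A (n - 1)))) / 2)
    \<and> (rho A = (row_sum A (n - 1) + S - T +
           sqrt ((row_sum A (n - 1) - S + T)\<^sup>2
                 + 4 * T * (\<Sum>k<n - 1. row_sum A k - row_sum A (n - 1)))) / 2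
         \<longleftrightarrow> ((\<forall>i<n. row_sum A i = row_sum A 0) \<or>
              (T > 0 \<and> (\<exists>t. 1 \<le> t \<and> t \<le> n - 1 \<and>
                  (\<forall>k<t. A $$ (k, k) = S) \<and>
                  (\<forall>k<n. \<forall>l<t. k \<noteq> l \<longrightarrow> A $$ (k, l) = T) \<and>
                  (\<forall>k. t \<le> k \<and> k < n \<longrightarrow> row_sum A k = row_sum A t)))))"
proof -
  note n2 = assms(1) and A = assms(2) and nn = assms(3) and irr = assms(4) and mono = assms(5)
  have n: "n > 0" using n2 by simp
  define r where "r i = row_sum A i" for i
  define Rn where "Rn = r (n - 1)"
  define d where "d k = r k - Rn" for k
  define D where "D = (\<Sum>k<n - 1. d k)"
  define sq where "sq = sqrt ((Rn - S + T)\<^sup>2 + 4 * T * D)"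
  define lam where "lam = (Rn + S - T + sq) / 2"
  define RHS where "RHS = ((\<forall>i<n. r i = r 0) \<or>
              (T > 0 \<and> (\<exists>t. 1 \<le> t \<and> t \<le> n - 1 \<and>
                  (\<forall>k<t. A $$ (k, k) = S) \<and>
                  (\<forall>k<n. \<forall>l<t. k \<noteq> l \<longrightarrow> A $$ (k, l) = T) \<and>
                  (\<forall>k. t \<le> k \<and> k < n \<longrightarrow> r k = r t))))"
  have goal_eq: "?thesis = (rho A \<ge> lam \<and> (rho A = lam \<longleftrightarrow> RHS))"
    unfolding lam_def sq_def D_def d_def Rn_def r_def RHS_def by simp
  have Ann: "A $$ (i, j) \<ge> 0" if "i < n" "j < n" for i j
    using nn A that unfolding nonneg_mat_def by auto
  have Sset: "{A $$ (i, i) | i. i < n} = (\<lambda>i. A $$ (i, i)) ` {..<n}" by auto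
  have Sle: "S \<le> A $$ (i, i)" if "i < n" for i
    unfolding S_def Sset using that by (intro Min_le) auto
  have Tset: "{A $$ (i, j) | i j. i < n \<and> j < n \<and> i \<noteq> j} =
      (\<lambda>(i, j). A $$ (i, j)) ` {(i, j). i < n \<and> j < n \<and> i \<noteq> j}" by auto
  have Tfin: "finite {(i, j). i < n \<and> j < n \<and> i \<noteq> j}"
    by (rule finite_subset[of _ "{..<n} \<times> {..<n}"]) auto
  have Tle: "T \<le> A $$ (i, j)" if "i < n" "j < n" "i \<noteq> j" for i j
    unfolding T_def Tset using that Tfin by (intro Min_le) auto
  have "(0, 1) \<in> {(i, j). i < n \<and> j < (n::nat) \<and> i \<noteq> j}" using n2 by auto
  hence Tne: "{(i, j). i < n \<and> j < n \<and> i \<noteq> j} \<noteq> {}" by blast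
  have "T \<in> (\<lambda>(i, j). A $$ (i, j)) ` {(i, j). i < n \<and> j < n \<and> i \<noteq> j}"
    unfolding T_def Tset using Tfin Tne by (intro Min_in) auto
  hence T0: "T \<ge> 0" using Ann by auto
  have rmv: "r i = mv A n (\<lambda>_. 1) i" for i unfolding r_def by (rule row_sum_mv[OF A])
  have rmono: "r j \<le> r i" if "i \<le> j" "j < n" for i j using mono that unfolding r_def by auto
  have d0: "d k \<ge> 0" if "k < n" for k unfolding d_def Rn_def using rmono[of k "n - 1"] that n by simp
  have dlast: "d (n - 1) = 0" unfolding d_def Rn_def by simp
  have Dfull: "(\<Sum>k<n. d k) = D"
  proof -
    have "{..<n} = insert (n - 1) {..<n - 1}" using n by auto
    thus ?thesis unfolding D_def using dlast by simp
  qed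
  have D0: "D \<ge> 0" unfolding D_def using d0 by (intro sum_nonneg) auto
  have RnST: "Rn \<ge> S + T"
  proof -
    have "Rn = (\<Sum>j<n. A $$ (n - 1, j))" unfolding Rn_def r_def row_sum_def using A by simp
    also have "\<dots> \<ge> (\<Sum>j\<in>{n - 1, 0}. A $$ (n - 1, j))"
      using n2 Ann by (intro sum_mono2) auto
    also have "(\<Sum>j\<in>{n - 1, 0}. A $$ (n - 1, j)) = A $$ (n - 1, n - 1) + A $$ (n - 1, 0)"
      using n2 by simp
    finally show ?thesis using Sle[of "n - 1"] Tle[of "n - 1" 0] n2 by simp
  qed
  show ?thesis unfolding goal_eq
  proof (cases "T = 0")
    case True
    have "sq = Rn - S" unfolding sq_def using True RnST by simp
    hence lamRn: "lam = Rn" unfolding lam_def using True by simp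
    have xpos: "\<forall>i<n. (\<lambda>_. 1::real) i > 0" by simp
    have ge: "\<forall>i<n. mv A n (\<lambda>_. 1) i \<ge> lam * 1"
    proof (intro allI impI)
      fix i assume i: "i < n"
      have "Rn \<le> r i" using rmono[of i "n - 1"] i n unfolding Rn_def by simp
      thus "mv A n (\<lambda>_. 1) i \<ge> lam * 1" unfolding lamRn rmv by simp
    qed
    have "rho A \<ge> lam" using L1[OF A n nn xpos ge] by simp
    moreover have "rho A = lam \<longleftrightarrow> RHS"
    proof
      assume eq: "rho A = lam"
      show RHS
      proof (rule ccontr)
        assume "\<not> RHS"
        hence "\<not> (\<forall>i<n. r i = r 0)" unfolding RHS_def by blast
        then obtain i where i: "i < n" "r i \<noteq> r 0" by blast
        have "\<exists>i<n. mv A n (\<lambda>_. 1) i > lam * 1"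
        proof (cases "r 0 = Rn")
          case True
          have "r i \<le> r 0" using rmono[of 0 i] i by simp
          moreover have "Rn \<le> r i" using rmono[of i "n - 1"] i n unfolding Rn_def by simp
          ultimately have "r i > Rn" using True i by auto
          hence "mv A n (\<lambda>_. 1) i > lam * 1" unfolding lamRn rmv by simp
          thus ?thesis using i by blast
        next
          case False
          hence "r 0 > Rn" using rmono[of 0 "n - 1"] n unfolding Rn_def by auto
          hence "mv A n (\<lambda>_. 1) 0 > lam * 1" unfolding lamRn rmv by simp
          thus ?thesis using n by blast
        qed
        from L3[OF A n nn irr xpos ge this] eq show False by simp
      qed
    next
      assume RHS
      have nT: "\<not> T > 0" using True by simp
      have all: "\<forall>i<n. r i = r 0" by (rule dl[OF \<open>RHS\<close>[unfolded RHS_def] nT])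
      have rl: "r (n - 1) = r 0" using all[rule_format, of "n - 1"] n by linarith
      have "\<forall>i<n. mv A n (\<lambda>_. 1) i = lam * 1"
      proof (intro allI impI)
        fix i assume "i < n"
        hence "r i = Rn" using all[rule_format, of i] rl unfolding Rn_def by linarith
        thus "mv A n (\<lambda>_. 1) i = lam * 1" unfolding lamRn rmv by simp
      qed
      from L2[OF A n nn xpos this] \<open>rho A \<ge> lam\<close> show "rho A = lam" by simp
    qed
    ultimately show "rho A \<ge> lam \<and> (rho A = lam \<longleftrightarrow> RHS)" by simp
  next
    case False
    hence Tpos: "T > 0" using T0 by simp
    define a where "a = Rn - S + T"
    define c where "c = (a + sq) / 2"
    have apos: "a > 0" unfolding a_def using RnST Tpos by simp
    have arg0: "(Rn - S + T)\<^sup>2 + 4 * T * D \<ge> 0" using D0 T0 by simp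
    have sq0: "sq \<ge> 0" unfolding sq_def using arg0 by simp
    have sq2: "sq\<^sup>2 = a\<^sup>2 + 4 * T * D" unfolding sq_def a_def using D0 T0 by simp
    have cpos: "c > 0" unfolding c_def using apos sq0 by simp
    have cc: "c * c - a * c = T * D" unfolding c_def using sq2
      by (simp add: power2_eq_square field_simps)
    have lamc: "lam = c + S - T" unfolding lam_def c_def a_def by (simp add: field_simps)
    define x where "x k = 1 + d k / c" for k
    have xpos: "\<forall>i<n. x i > 0" using d0 cpos unfolding x_def by (simp add: add_pos_nonneg)
    define sel where "sel i j = (if j = i then S else T)" for i j :: nat
    define e where "e i = (\<Sum>j<n. (A $$ (i, j) - sel i j) * d j)" for i
    have eterm: "(A $$ (i, j) - sel i j) * d j \<ge> 0" if "i < n" "j < n" for i j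
      using Sle Tle d0 that unfolding sel_def by (auto intro!: mult_nonneg_nonneg)
    have e0: "e i \<ge> 0" if "i < n" for i unfolding e_def using eterm that by (intro sum_nonneg) auto
    have key: "mv A n x i - lam * x i = e i / c" if i: "i < n" for i
    proof -
      have s1: "(\<Sum>j<n. sel i j * d j) = T * D + (S - T) * d i"
      proof -
        have "(\<Sum>j<n. sel i j * d j) = (\<Sum>j<n. T * d j + (if j = i then (S - T) * d j else 0))"
          unfolding sel_def by (intro sum.cong) (auto simp: algebra_simps)
        also have "\<dots> = T * D + (S - T) * d i"
          using i by (simp add: sum.distrib sum_distrib_left[symmetric] Dfull)
        finally show ?thesis .
      qed
      have "(\<Sum>j<n. A $$ (i, j) * d j) = (\<Sum>j<n. (A $$ (i, j) - sel i j) * d j + sel i j * d j)"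
        by (intro sum.cong) (auto simp: algebra_simps)
      also have "\<dots> = e i + (\<Sum>j<n. sel i j * d j)" unfolding e_def by (rule sum.distrib)
      finally have s2': "(\<Sum>j<n. A $$ (i, j) * d j) = e i + (\<Sum>j<n. sel i j * d j)" .
      have s2: "(\<Sum>j<n. A $$ (i, j) * d j) = e i + T * D + (S - T) * d i"
        using s2' s1 by linarith
      have "c * mv A n x i = (\<Sum>j<n. A $$ (i, j) * (c + d j))"
        unfolding mv_def x_def sum_distrib_left using cpos
        by (intro sum.cong) (auto simp: field_simps)
      also have "\<dots> = c * r i + (\<Sum>j<n. A $$ (i, j) * d j)"
        unfolding rmv mv_def by (simp add: algebra_simps sum.distrib sum_distrib_left)
      also have "\<dots> = c * (Rn + d i) + e i + T * D + (S - T) * d i"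
        using s2 by (simp add: d_def algebra_simps)
      finally have m: "c * mv A n x i = c * (Rn + d i) + e i + T * D + (S - T) * d i" .
      have "c * (lam * x i) = (c + S - T) * (c + d i)"
        unfolding lamc x_def using cpos by (simp add: field_simps)
      hence "c * (mv A n x i - lam * x i) = e i + T * D - (c * c - a * c)"
        using m unfolding a_def by (simp add: algebra_simps)
      hence "c * (mv A n x i - lam * x i) = e i" using cc by simp
      thus ?thesis using cpos by (simp add: field_simps)
    qed
    have ge: "\<forall>i<n. mv A n x i \<ge> lam * x i"
    proof (intro allI impI)
      fix i assume i: "i < n"
      have "e i / c \<ge> 0" using e0[OF i] cpos by simp
      thus "mv A n x i \<ge> lam * x i" using key[OF i] by simp
    qed
    have lb: "rho A \<ge> lam" by (rule L1[OF A n nn xpos ge])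
    have eqiff: "rho A = lam \<longleftrightarrow> (\<forall>i<n. e i = 0)"
    proof
      assume eq: "rho A = lam"
      show "\<forall>i<n. e i = 0"
      proof (rule ccontr)
        assume "\<not> (\<forall>i<n. e i = 0)"
        then obtain i where i: "i < n" "e i \<noteq> 0" by auto
        hence "e i > 0" using e0 by (simp add: order_less_le)
        hence "e i / c > 0" using cpos by simp
        hence "mv A n x i > lam * x i" using key[OF i(1)] by simp
        hence "\<exists>i<n. mv A n x i > lam * x i" using i by auto
        from L3[OF A n nn irr xpos ge this] eq show False by simp
      qed
    next
      assume "\<forall>i<n. e i = 0"
      hence "\<forall>i<n. mv A n x i = lam * x i" using key by simp
      from L2[OF A n nn xpos this] lb show "rho A = lam" by simp
    qed
    have ezero: "(\<forall>i<n. e i = 0) \<longleftrightarrow> (\<forall>i j. i < n \<longrightarrow> j < n \<longrightarrow> d j \<noteq> 0 \<longrightarrow> A $$ (i, j) = sel i j)"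
    proof -
      have "(\<forall>i<n. e i = 0) \<longleftrightarrow> (\<forall>i<n. \<forall>j<n. (A $$ (i, j) - sel i j) * d j = 0)"
      proof -
        have "e i = 0 \<longleftrightarrow> (\<forall>j\<in>{..<n}. (A $$ (i, j) - sel i j) * d j = 0)" if i: "i < n" for i
          unfolding e_def by (rule sum_nonneg_eq_0_iff) (use eterm i in auto)
        thus ?thesis by auto
      qed
      also have "\<dots> \<longleftrightarrow> (\<forall>i j. i < n \<longrightarrow> j < n \<longrightarrow> d j \<noteq> 0 \<longrightarrow> A $$ (i, j) = sel i j)" by auto
      finally show ?thesis .
    qed
    have comb: "(\<forall>i j. i < n \<longrightarrow> j < n \<longrightarrow> d j \<noteq> 0 \<longrightarrow> A $$ (i, j) = sel i j) \<longleftrightarrow> RHS"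
    proof
      assume P: "\<forall>i j. i < n \<longrightarrow> j < n \<longrightarrow> d j \<noteq> 0 \<longrightarrow> A $$ (i, j) = sel i j"
      show RHS
      proof (cases "\<forall>i<n. r i = r 0")
        case True thus ?thesis unfolding RHS_def by (rule disjI1)
      next
        case False
        have dz: "d 0 \<noteq> 0"
        proof
          assume "d 0 = 0"
          hence r0: "r 0 = Rn" unfolding d_def by simp
          have "\<forall>i<n. r i = r 0"
          proof (intro allI impI)
            fix i assume i: "i < n"
            have "r i \<le> r 0" using rmono[of 0 i] i by simp
            moreover have "Rn \<le> r i" using rmono[of i "n - 1"] i n unfolding Rn_def by simp
            ultimately show "r i = r 0" using r0 by simp
          qed
          thus False using False by simp
        qed
        define t where "t = (LEAST j. d j = 0)"
        have dt: "d t = 0" unfolding t_def using dlast by (rule LeastI)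
        have tle: "t \<le> n - 1" unfolding t_def using dlast by (rule Least_le)
        have t1: "t \<ge> 1" using dt dz by (cases t) auto
        have dlt: "d k \<noteq> 0" if "k < t" for k using not_less_Least[of k "\<lambda>j. d j = 0"] that
          unfolding t_def by blast
        have i1: "\<forall>k<t. A $$ (k, k) = S"
        proof (intro allI impI)
          fix k assume k: "k < t"
          hence "k < n" using tle n by linarith
          thus "A $$ (k, k) = S" using P dlt[OF k] unfolding sel_def by auto
        qed
        have i2: "\<forall>k<n. \<forall>l<t. k \<noteq> l \<longrightarrow> A $$ (k, l) = T"
        proof (intro allI impI)
          fix k l assume "k < n" "l < t" "k \<noteq> l"
          moreover have "l < n" using \<open>l < t\<close> tle n by linarith
          ultimately show "A $$ (k, l) = T" using P dlt unfolding sel_def by auto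
        qed
        have i3: "\<forall>k. t \<le> k \<and> k < n \<longrightarrow> r k = r t"
        proof (intro allI impI)
          fix k assume k: "t \<le> k \<and> k < n"
          have "r k \<le> r t" using rmono k by auto
          moreover have "r k \<ge> Rn" using rmono[of k "n - 1"] k unfolding Rn_def by linarith
          moreover have "r t = Rn" using dt unfolding d_def by simp
          ultimately show "r k = r t" by simp
        qed
        show ?thesis unfolding RHS_def using Tpos t1 tle i1 i2 i3 by blast
      qed
    next
      assume R: RHS
      show "\<forall>i j. i < n \<longrightarrow> j < n \<longrightarrow> d j \<noteq> 0 \<longrightarrow> A $$ (i, j) = sel i j"
      proof (cases "\<forall>i<n. r i = r 0")
        case True
        have "\<forall>j<n. d j = 0"
        proof (intro allI impI)
          fix j assume "j < n"
          thus "d j = 0" using True[rule_format, of j] True[rule_format, of "n - 1"] n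
            unfolding d_def Rn_def by simp
        qed
        thus ?thesis by auto
      next
        case False
        have "T > 0 \<and> (\<exists>t. 1 \<le> t \<and> t \<le> n - 1 \<and>
                  (\<forall>k<t. A $$ (k, k) = S) \<and>
                  (\<forall>k<n. \<forall>l<t. k \<noteq> l \<longrightarrow> A $$ (k, l) = T) \<and>
                  (\<forall>k. t \<le> k \<and> k < n \<longrightarrow> r k = r t))"
          by (rule dl2[OF R[unfolded RHS_def] False])
        then obtain t where t: "1 \<le> t" "t \<le> n - 1" "\<forall>k<t. A $$ (k, k) = S"
          "\<forall>k<n. \<forall>l<t. k \<noteq> l \<longrightarrow> A $$ (k, l) = T" "\<forall>k. t \<le> k \<and> k < n \<longrightarrow> r k = r t"
          by blast
        show ?thesis
        proof (intro allI impI)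
          fix i j assume ij: "i < n" "j < n" "d j \<noteq> 0"
          have "j < t"
          proof (rule ccontr)
            assume "\<not> j < t"
            hence "t \<le> j" by simp
            hence "r j = r t" using t(5) ij by blast
            moreover have "r (n - 1) = r t" using t(5)[rule_format, of "n - 1"] t(2) n by linarith
            ultimately have "r j = Rn" unfolding Rn_def by simp
            thus False using ij(3) unfolding d_def by simp
          qed
          thus "A $$ (i, j) = sel i j" using t(3,4) ij unfolding sel_def by auto
        qed
      qed
    qed
    show "rho A \<ge> lam \<and> (rho A = lam \<longleftrightarrow> RHS)" using lb eqiff ezero comb by simp
  qed
qed

end
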